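(* Let $X$ be a strongly-stable sequence with respect to a full BST $T$, and assume $X$ is a whole multiple of its atomic sequence. Then $$\hat c(GF,X,T)=\sum_{x\text{ a leaf of }T}\frac{d(x)+1}{2^{d(x)}}.$$
   Context: Binary search tree model. Keys are $\{1,\dots,n\}$. A query sequence is $X=[x_1,\dots,x_m]$, and $T_0$ is an initial BST. An algorithm $A$ serves $x_1,\dots,x_m$ in order. Before serving $x_t$ it holds a BST $T_{t-1}$; it searches $x_t$ from the root and may then restructure the tree by rotations into $T_t$. Let $P_t$ be the set of nodes on the root-to-$x_t$ path of $T_{t-1}$, and let $U_t$ be the node set of the minimal subtree containing all edges rotated in transforming $T_{t-1}$ into $T_t$. The cost at time $t$ is $|P_t\cup U_t|$. $\mathrm{cost}(A,X,T_0)$ is the sum of these costs, and $\hat c(A,X,T_0)=\mathrm{cost}(A,X,T_0)/m$. $d(x)$ is the number of edges from the root to $x$. Greedy Future ($GF$). After finding $x_t$ in $T_{t-1}$, let $v_1<\dots<v_k$ be the keys on the root-to-$x_t$ path, set $v_0=-\infty$ and $v_{k+1}=+\infty$, and let $R_0,\dots,R_k$ be the subtrees hanging off this path. For each $i$, $\tau(v_i)$ is the smallest $s>t$ with $x_s\in(v_{i-1},v_{i+1})$, or $+\infty$ if there is none. $GF$ rearranges $v_1,\dots,v_k$ as a treap: a BST in key order and a heap in $\tau$, with the smallest $\tau$ at the top. Ties in $\tau$ are broken in favor of the node of smaller depth in $T_{t-1}$. It then reattaches $R_0,\dots,R_k$ unchanged at their unique positions, giving $T_t$. Stable sequences. Let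 $T$ be a full binary search tree (every inner node has exactly two children), and let $X$ be a query sequence consisting only of keys stored at leaves of $T$. For an inner node $v$, let $X_v$ be the subsequence of $X$ consisting of the queries to keys in the subtree of $v$. The node $v$ is strongly-stable if consecutive queries of $X_v$ alternate between the left and right subtrees of $v$. $X$ (and $T$) is strongly-stable if every inner node of $T$ is strongly-stable. Given $T$ and the subtree each node's alternation starts with, the sequence is determined up to its length. Its atomic sequence is the shortest such sequence all of whose repetitions are again such sequences. $X$ is a whole multiple of its atomic sequence if it is a concatenation of copies of it. *)

theory Defs
  imports Complex_Main "HOL-Library.Tree" "HOL-Library.Extended_Nat" "HOL-Library.Product_Lexorder"
begin

fun search_path :: "nat tree \<Rightarrow> nat \<Rightarrow> nat list" where
  "search_path Leaf x = []"
| "search_path (Node l a r) x =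
     (if x < a then a # search_path l x
      else if a < x then a # search_path r x
      else [a])"

definition depth :: "nat tree \<Rightarrow> nat \<Rightarrow> nat" where
  "depth T x = length (search_path T x) - 1"

fun hanging :: "nat tree \<Rightarrow> nat \<Rightarrow> nat tree list" where
  "hanging Leaf x = [Leaf]"
| "hanging (Node l a r) x =
     (if x < a then hanging l x @ [r]
      else if a < x then l # hanging r x
      else [l, r])"

definition next_time :: "nat list \<Rightarrow> nat \<Rightarrow> (nat \<Rightarrow> bool) \<Rightarrow> enat" where
  "next_time X t P =
     (if \<exists>s. t < s \<and> s < length X \<and> P (X ! s)
      then enat (LEAST s. t < s \<and> s < length X \<and> P (X ! s))
      else \<infinity>)"

text \<open>Treap construction: vs is the sorted list of path keys, Rs the list of the
  length vs + 1 hanging subtrees in key order; the key with smallest priority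
  becomes the root.\<close>
function gf_build :: "(nat \<Rightarrow> enat \<times> nat) \<Rightarrow> nat list \<Rightarrow> nat tree list \<Rightarrow> nat tree" where
  "gf_build prio vs Rs =
     (if vs = [] then (case Rs of [] \<Rightarrow> Leaf | R # _ \<Rightarrow> R)
      else
        (let v = arg_min_list prio vs;
             L = filter (\<lambda>u. u < v) vs;
             G = filter (\<lambda>u. v < u) vs;
             j = length L
         in Node (gf_build prio L (take (j + 1) Rs)) v (gf_build prio G (drop (j + 1) Rs))))"
  by pat_completeness auto
termination
  by (relation "measure (\<lambda>(_, vs, _). length vs)")
     (auto intro!: length_filter_less dest: arg_min_list_in[where f = "_ :: nat \<Rightarrow> enat \<times> nat"])

text \<open>The priority of a path key v
  is (tau(v), depth of v in T), compared lexicographically: smallest tau on top,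
  ties broken in favour of smaller depth.  tau(v) is the next time after t of a query
  in the open interval between the predecessor and successor of v among the path keys.\<close>
definition gf_step :: "nat list \<Rightarrow> nat \<Rightarrow> nat tree \<Rightarrow> nat tree" where
  "gf_step X t T =
     (let x = X ! t;
          p = search_path T x;
          tau = (\<lambda>v. next_time X t
                   (\<lambda>y. (\<forall>u\<in>set p. u < v \<longrightarrow> u < y) \<and> (\<forall>u\<in>set p. v < u \<longrightarrow> y < u)));
          prio = (\<lambda>v. (tau v, depth T v))
      in gf_build prio (sort p) (hanging T x))"

fun gf_tree :: "nat list \<Rightarrow> nat tree \<Rightarrow> nat \<Rightarrow> nat tree" where
  "gf_tree X T0 0 = T0"
| "gf_tree X T0 (Suc t) = gf_step X t (gf_tree X T0 t)"

text \<open>Cost of GF: GF only rearranges the nodes of the search path P_t, so U_t is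
  contained in P_t and the cost at time t is |P_t| = d(x_t) + 1 in T_(t-1).\<close>
definition gf_cost :: "nat list \<Rightarrow> nat tree \<Rightarrow> nat" where
  "gf_cost X T0 = (\<Sum>t<length X. length (search_path (gf_tree X T0 t) (X ! t)))"

definition gf_avg_cost :: "nat list \<Rightarrow> nat tree \<Rightarrow> real" where
  "gf_avg_cost X T0 = real (gf_cost X T0) / real (length X)"

definition full_tree :: "'a tree \<Rightarrow> bool" where
  "full_tree T \<longleftrightarrow> (\<forall>l a r. Node l a r \<in> subtrees T \<longrightarrow> (l = Leaf \<longleftrightarrow> r = Leaf))"

definition leaf_keys :: "'a tree \<Rightarrow> 'a set" where
  "leaf_keys T = {a. Node Leaf a Leaf \<in> subtrees T}"

definition sub_seq :: "'a tree \<Rightarrow> 'a list \<Rightarrow> 'a list" where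
  "sub_seq v X = filter (\<lambda>y. y \<in> set_tree v) X"

definition strongly_stable_node :: "'a tree \<Rightarrow> 'a tree \<Rightarrow> 'a list \<Rightarrow> bool" where
  "strongly_stable_node l r Xv \<longleftrightarrow>
     (\<forall>i. i + 1 < length Xv \<longrightarrow> (Xv ! i \<in> set_tree l \<longleftrightarrow> Xv ! (i + 1) \<in> set_tree r))"

definition strongly_stable :: "'a tree \<Rightarrow> 'a list \<Rightarrow> bool" where
  "strongly_stable T X \<longleftrightarrow>
     full_tree T \<and> set X \<subseteq> leaf_keys T \<and>
     (\<forall>l a r. Node l a r \<in> subtrees T \<and> l \<noteq> Leaf \<and> r \<noteq> Leaf \<longrightarrow>
        strongly_stable_node l r (sub_seq (Node l a r) X))"

text \<open>Start data s: s a = True means the alternation at the inner node with key a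
  starts with its left subtree.\<close>
definition conforms :: "'a tree \<Rightarrow> ('a \<Rightarrow> bool) \<Rightarrow> 'a list \<Rightarrow> bool" where
  "conforms T s X \<longleftrightarrow> strongly_stable T X \<and>
     (\<forall>l a r. Node l a r \<in> subtrees T \<and> l \<noteq> Leaf \<and> r \<noteq> Leaf \<and> sub_seq (Node l a r) X \<noteq> []
        \<longrightarrow> (hd (sub_seq (Node l a r) X) \<in> set_tree l \<longleftrightarrow> s a))"

definition atomic_seq :: "'a tree \<Rightarrow> ('a \<Rightarrow> bool) \<Rightarrow> 'a list \<Rightarrow> bool" where
  "atomic_seq T s A \<longleftrightarrow> A \<noteq> [] \<and>
     (\<forall>k\<ge>1. conforms T s (concat (replicate k A))) \<and>
     (\<forall>B. B \<noteq> [] \<and> (\<forall>k\<ge>1. conforms T s (concat (replicate k B))) \<longrightarrow> length A \<le> length B)"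

end

theory Submission
  imports Defs
begin


declare gf_build.simps[simp del]

lemma search_path_subset: "set (search_path t x) \<subseteq> set_tree t"
  by (induction t) auto

lemma length_hanging: "length (hanging t x) = length (search_path t x) + 1"
  by (induction t) auto

lemma search_path_ne: "x \<in> set_tree t \<Longrightarrow> search_path t x \<noteq> []"
  by (cases t) auto

lemma arg_min_list_unique:
  fixes f :: "'a \<Rightarrow> 'b::linorder"
  assumes "a \<in> set vs" "\<forall>u\<in>set vs. u \<noteq> a \<longrightarrow> f a < f u"
  shows "arg_min_list f vs = a"
proof (rule ccontr)
  assume ne: "arg_min_list f vs \<noteq> a"
  have vs: "vs \<noteq> []" using assms by auto
  have "arg_min_list f vs \<in> set vs" using arg_min_list_in[OF vs] .
  hence "f a < f (arg_min_list f vs)" using assms ne by blast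
  moreover have "f (arg_min_list f vs) \<le> f a"
    using f_arg_min_list_f[OF vs, of f] assms(1) by simp
  ultimately show False by simp
qed

lemma sort_snoc_max: "\<forall>u\<in>set xs. u < (a::nat) \<Longrightarrow> sort (a # xs) = sort xs @ [a]"
  by (simp add: sorted_insort_is_snoc less_imp_le)

lemma sort_cons_min: "\<forall>u\<in>set xs. (a::nat) < u \<Longrightarrow> sort (a # xs) = a # sort xs"
  by (simp add: insort_is_Cons less_imp_le)

lemma gf_build_nil: "gf_build prio [] (R # Rs) = R"
  by (subst gf_build.simps) simp

lemma build_id:
  assumes "bst t" "x \<in> set_tree t"
    "\<forall>l a r. Node l a r \<in> subtrees t \<longrightarrow> x \<in> set_tree (Node l a r) \<longrightarrow>
        (\<forall>u\<in>set (search_path (Node l a r) x). u \<noteq> a \<longrightarrow> prio a < prio u)"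
  shows "gf_build prio (sort (search_path t x)) (hanging t x) = t"
  using assms
proof (induction t)
  case Leaf
  then show ?case by simp
next
  case (Node l a r)
  let ?p = "search_path (Node l a r) x"
  have hp: "\<forall>u\<in>set ?p. u \<noteq> a \<longrightarrow> prio a < prio u" using Node.prems by auto
  have am: "arg_min_list prio (sort ?p) = a"
    by (rule arg_min_list_unique) (use hp in auto)
  have ne: "sort ?p \<noteq> []" by simp
  consider "x < a" | "a < x" | "x = a" by linarith
  then show ?case
  proof cases
    case 1
    let ?pl = "search_path l x"
    have xl: "x \<in> set_tree l" using Node.prems 1 by auto
    have pl: "\<forall>u\<in>set ?pl. u < a" using search_path_subset[of l x] Node.prems(1) by auto
    have p: "?p = a # ?pl" using 1 by simp
    have s: "sort ?p = sort ?pl @ [a]" using p sort_snoc_max[OF pl] by simp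
    have L: "filter (\<lambda>u. u < a) (sort ?p) = sort ?pl" using s pl by (auto intro: filter_True)
    have G: "filter (\<lambda>u. a < u) (sort ?p) = []" using s pl by (auto simp: filter_empty_conv)
    have h: "hanging (Node l a r) x = hanging l x @ [r]" using 1 by simp
    have IH: "gf_build prio (sort ?pl) (hanging l x) = l"
      using Node.IH(1) Node.prems xl by auto
    show ?thesis
      apply (subst gf_build.simps)
      using ne am L G h IH length_hanging[of l x] by (simp add: Let_def gf_build_nil)
  next
    case 2
    let ?pr = "search_path r x"
    have xr: "x \<in> set_tree r" using Node.prems 2 by auto
    have pr: "\<forall>u\<in>set ?pr. a < u" using search_path_subset[of r x] Node.prems(1) by auto
    have p: "?p = a # ?pr" using 2 by simp
    have s: "sort ?p = a # sort ?pr" using p sort_cons_min[OF pr] by simp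
    have L: "filter (\<lambda>u. u < a) (sort ?p) = []" using s pr by (auto simp: filter_empty_conv)
    have G: "filter (\<lambda>u. a < u) (sort ?p) = sort ?pr" using s pr by (auto intro: filter_True)
    have h: "hanging (Node l a r) x = l # hanging r x" using 2 by simp
    have IH: "gf_build prio (sort ?pr) (hanging r x) = r"
      using Node.IH(2) Node.prems xr by auto
    show ?thesis
      apply (subst gf_build.simps)
      using ne am L G h IH by (simp add: Let_def gf_build_nil)
  next
    case 3
    show ?thesis
      apply (subst gf_build.simps)
      using ne am 3 by (simp add: Let_def gf_build_nil)
  qed
qed



definition win :: "nat list \<Rightarrow> nat \<Rightarrow> nat \<Rightarrow> bool" where
  "win p v y = ((\<forall>u\<in>set p. u < v \<longrightarrow> u < y) \<and> (\<forall>u\<in>set p. v < u \<longrightarrow> y < u))"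

lemma set_tree_subtrees: "s \<in> subtrees t \<Longrightarrow> set_tree s \<subseteq> set_tree t"
  by (induction t) auto

lemma bst_subtrees: "bst t \<Longrightarrow> s \<in> subtrees t \<Longrightarrow> bst s"
  by (induction t) auto

lemma G:
  fixes V T :: "nat tree"
  assumes "bst V" "x \<in> set_tree V"
    "\<forall>v\<in>set_tree V. search_path T v = pre @ search_path V v"
    "\<forall>w\<in>set pre. (\<forall>z\<in>set_tree V. w < z) \<or> (\<forall>z\<in>set_tree V. z < w)"
  shows "\<forall>l a r. Node l a r \<in> subtrees V \<longrightarrow>
     (x \<in> set_tree l \<longrightarrow>
       (\<forall>z\<in>set_tree r. win (search_path T x) a z) \<and>
       (\<forall>u\<in>set (search_path l x). (\<forall>y\<in>set_tree V. win (search_path T x) u y \<longrightarrow> y \<in> set_tree l)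
            \<and> depth T a < depth T u)) \<and>
     (x \<in> set_tree r \<longrightarrow>
       (\<forall>z\<in>set_tree l. win (search_path T x) a z) \<and>
       (\<forall>u\<in>set (search_path r x). (\<forall>y\<in>set_tree V. win (search_path T x) u y \<longrightarrow> y \<in> set_tree r)
            \<and> depth T a < depth T u))"
  using assms
proof (induction V arbitrary: pre)
  case Leaf
  then show ?case by simp
next
  case (Node L b R)
  let ?p = "search_path T x"
  have bL: "\<forall>z\<in>set_tree L. z < b" and bR: "\<forall>z\<in>set_tree R. b < z" using Node.prems(1) by auto
  have spT: "\<And>v. v \<in> set_tree (Node L b R) \<Longrightarrow> search_path T v = pre @ search_path (Node L b R) v"
    using Node.prems(3) by blast
  have bnd: "\<And>w. w \<in> set pre \<Longrightarrow> (\<forall>z\<in>set_tree (Node L b R). w < z) \<or> (\<forall>z\<in>set_tree (Node L b R). z < w)"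
    using Node.prems(4) by blast
  have dep_b: "depth T b = length pre" using spT[of b] by (simp add: depth_def)
  have dep_L: "\<And>u. u \<in> set_tree L \<Longrightarrow> depth T u > length pre"
  proof -
    fix u assume u: "u \<in> set_tree L"
    hence "u < b" using bL by auto
    hence "search_path T u = pre @ b # search_path L u" using spT[of u] u by simp
    moreover have "search_path L u \<noteq> []" using search_path_ne[OF u] .
    ultimately show "depth T u > length pre" by (simp add: depth_def)
  qed
  have dep_R: "\<And>u. u \<in> set_tree R \<Longrightarrow> depth T u > length pre"
  proof -
    fix u assume u: "u \<in> set_tree R"
    hence "b < u" using bR by auto
    hence "search_path T u = pre @ b # search_path R u" using spT[of u] u by simp
    moreover have "search_path R u \<noteq> []" using search_path_ne[OF u] .
    ultimately show "depth T u > length pre" by (simp add: depth_def)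
  qed
  have caseL: "x \<in> set_tree L \<Longrightarrow>
       (\<forall>z\<in>set_tree R. win ?p b z) \<and>
       (\<forall>u\<in>set (search_path L x). (\<forall>y\<in>set_tree (Node L b R). win ?p u y \<longrightarrow> y \<in> set_tree L)
            \<and> depth T b < depth T u)"
  proof -
    assume xL: "x \<in> set_tree L"
    hence xb: "x < b" using bL by auto
    have p: "?p = pre @ b # search_path L x" using spT[of x] xL xb by simp
    have sL: "set (search_path L x) \<subseteq> set_tree L" by (rule search_path_subset)
    have A: "\<forall>z\<in>set_tree R. win ?p b z"
    proof
      fix z assume z: "z \<in> set_tree R"
      have zb: "b < z" using z bR by auto
      show "win ?p b z" unfolding win_def
      proof (intro conjI ballI impI)
        fix u assume u: "u \<in> set ?p" "u < b"
        show "u < z"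
        proof (cases "u \<in> set pre")
          case True
          from bnd[OF True] show ?thesis using u z by auto
        next
          case False thus ?thesis using u p sL zb by auto
        qed
      next
        fix u assume u: "u \<in> set ?p" "b < u"
        show "z < u"
        proof (cases "u \<in> set pre")
          case True
          from bnd[OF True] show ?thesis using u z by auto
        next
          case False
          have sLb: "\<forall>u\<in>set (search_path L x). u < b" using sL bL by auto
          show ?thesis using False u(1,2) p sLb by (metis Un_iff empty_set insert_iff less_asym list.simps(15) set_append)
        qed
      qed
    qed
    have B: "\<forall>u\<in>set (search_path L x). (\<forall>y\<in>set_tree (Node L b R). win ?p u y \<longrightarrow> y \<in> set_tree L)
            \<and> depth T b < depth T u"
    proof (intro ballI conjI impI)
      fix u y assume u: "u \<in> set (search_path L x)" and y: "y \<in> set_tree (Node L b R)" and w: "win ?p u y"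
      have "u < b" using u sL bL by auto
      moreover have "b \<in> set ?p" using p by simp
      ultimately have "y < b" using w unfolding win_def by blast
      thus "y \<in> set_tree L" using y bR by auto
    next
      fix u assume u: "u \<in> set (search_path L x)"
      show "depth T b < depth T u" using dep_b dep_L[of u] u sL by auto
    qed
    show ?thesis using A B by blast
  qed
  have caseR: "x \<in> set_tree R \<Longrightarrow>
       (\<forall>z\<in>set_tree L. win ?p b z) \<and>
       (\<forall>u\<in>set (search_path R x). (\<forall>y\<in>set_tree (Node L b R). win ?p u y \<longrightarrow> y \<in> set_tree R)
            \<and> depth T b < depth T u)"
  proof -
    assume xR: "x \<in> set_tree R"
    hence xb: "b < x" using bR by auto
    have p: "?p = pre @ b # search_path R x" using spT[of x] xR xb by simp
    have sR: "set (search_path R x) \<subseteq> set_tree R" by (rule search_path_subset)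
    have A: "\<forall>z\<in>set_tree L. win ?p b z"
    proof
      fix z assume z: "z \<in> set_tree L"
      have zb: "z < b" using z bL by auto
      show "win ?p b z" unfolding win_def
      proof (intro conjI ballI impI)
        fix u assume u: "u \<in> set ?p" "u < b"
        show "u < z"
        proof (cases "u \<in> set pre")
          case True
          from bnd[OF True] show ?thesis using u z by auto
        next
          case False
          have sRb: "\<forall>u\<in>set (search_path R x). b < u" using sR bR by auto
          show ?thesis using False u(1,2) p sRb by (metis Un_iff empty_set insert_iff less_asym list.simps(15) set_append)
        qed
      next
        fix u assume u: "u \<in> set ?p" "b < u"
        show "z < u"
        proof (cases "u \<in> set pre")
          case True
          from bnd[OF True] show ?thesis using u z by auto
        next
          case False thus ?thesis using u p sR zb by auto
        qed
      qed
    qed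
    have B: "\<forall>u\<in>set (search_path R x). (\<forall>y\<in>set_tree (Node L b R). win ?p u y \<longrightarrow> y \<in> set_tree R)
            \<and> depth T b < depth T u"
    proof (intro ballI conjI impI)
      fix u y assume u: "u \<in> set (search_path R x)" and y: "y \<in> set_tree (Node L b R)" and w: "win ?p u y"
      have "b < u" using u sR bR by auto
      moreover have "b \<in> set ?p" using p by simp
      ultimately have "b < y" using w unfolding win_def by blast
      thus "y \<in> set_tree R" using y bL by auto
    next
      fix u assume u: "u \<in> set (search_path R x)"
      show "depth T b < depth T u" using dep_b dep_R[of u] u sR by auto
    qed
    show ?thesis using A B by blast
  qed
  have IHL: "x \<in> set_tree L \<Longrightarrow> ?case" if "False" for dummy using that by simp
  show ?case
  proof (intro allI impI)
    fix l a r assume sub: "Node l a r \<in> subtrees (Node L b R)"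
    have cases3: "Node l a r = Node L b R \<or> Node l a r \<in> subtrees L \<or> Node l a r \<in> subtrees R"
      using sub by auto
    show "(x \<in> set_tree l \<longrightarrow>
       (\<forall>z\<in>set_tree r. win ?p a z) \<and>
       (\<forall>u\<in>set (search_path l x). (\<forall>y\<in>set_tree (Node L b R). win ?p u y \<longrightarrow> y \<in> set_tree l)
            \<and> depth T a < depth T u)) \<and>
     (x \<in> set_tree r \<longrightarrow>
       (\<forall>z\<in>set_tree l. win ?p a z) \<and>
       (\<forall>u\<in>set (search_path r x). (\<forall>y\<in>set_tree (Node L b R). win ?p u y \<longrightarrow> y \<in> set_tree r)
            \<and> depth T a < depth T u))"
    proof (cases "Node l a r = Node L b R")
      case True
      thus ?thesis using caseL caseR by simp
    next
      case False
      hence inLR: "Node l a r \<in> subtrees L \<or> Node l a r \<in> subtrees R" using cases3 by blast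
      have stsub: "set_tree (Node l a r) \<subseteq> set_tree L \<or> set_tree (Node l a r) \<subseteq> set_tree R"
        using inLR set_tree_subtrees by blast
      show ?thesis
      proof (cases "x \<in> set_tree L")
        case xL: True
        have xb: "x < b" using xL bL by auto
        have notR: "x \<notin> set_tree R" using xb bR by auto
        have IH: "\<forall>l a r. Node l a r \<in> subtrees L \<longrightarrow>
           (x \<in> set_tree l \<longrightarrow>
             (\<forall>z\<in>set_tree r. win ?p a z) \<and>
             (\<forall>u\<in>set (search_path l x). (\<forall>y\<in>set_tree L. win ?p u y \<longrightarrow> y \<in> set_tree l)
                  \<and> depth T a < depth T u)) \<and>
           (x \<in> set_tree r \<longrightarrow>
             (\<forall>z\<in>set_tree l. win ?p a z) \<and>
             (\<forall>u\<in>set (search_path r x). (\<forall>y\<in>set_tree L. win ?p u y \<longrightarrow> y \<in> set_tree r)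
                  \<and> depth T a < depth T u))"
        proof (rule Node.IH(1)[of "pre @ [b]"])
          show "bst L" using Node.prems(1) by simp
          show "x \<in> set_tree L" by fact
          show "\<forall>v\<in>set_tree L. search_path T v = (pre @ [b]) @ search_path L v"
            using spT bL by auto
          show "\<forall>w\<in>set (pre @ [b]). (\<forall>z\<in>set_tree L. w < z) \<or> (\<forall>z\<in>set_tree L. z < w)"
            using bnd bL by auto
        qed
        have pb: "b \<in> set ?p" using spT[of x] xL xb by simp
        show ?thesis
        proof (cases "Node l a r \<in> subtrees L")
          case True
          have stl: "set_tree (Node l a r) \<subseteq> set_tree L" using True set_tree_subtrees by blast
          have lift: "\<And>u y c. u \<in> set (search_path c x) \<Longrightarrow> set_tree c \<subseteq> set_tree L \<Longrightarrow>
                 y \<in> set_tree (Node L b R) \<Longrightarrow> win ?p u y \<Longrightarrow> y \<in> set_tree L"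
          proof -
            fix u y c assume u: "u \<in> set (search_path c x)" "set_tree c \<subseteq> set_tree L"
              and y: "y \<in> set_tree (Node L b R)" and w: "win ?p u y"
            have "u < b" using u search_path_subset[of c x] bL by auto
            hence "y < b" using w pb unfolding win_def by blast
            thus "y \<in> set_tree L" using y bR by auto
          qed
          have lsub: "set_tree l \<subseteq> set_tree L" "set_tree r \<subseteq> set_tree L" using stl by auto
          note ih = IH[rule_format, OF True]
          show ?thesis
          proof (rule conjI; intro impI)
            assume xl: "x \<in> set_tree l"
            note hh = conjunct1[OF ih, rule_format, OF xl]
            show "(\<forall>z\<in>set_tree r. win ?p a z) \<and>
              (\<forall>u\<in>set (search_path l x). (\<forall>y\<in>set_tree (Node L b R). win ?p u y \<longrightarrow> y \<in> set_tree l)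
                \<and> depth T a < depth T u)"
            proof (intro conjI ballI impI)
              fix z assume "z \<in> set_tree r" thus "win ?p a z" using conjunct1[OF hh] by blast
            next
              fix u y assume u: "u \<in> set (search_path l x)" and y: "y \<in> set_tree (Node L b R)" and w: "win ?p u y"
              have yL: "y \<in> set_tree L" by (rule lift[OF u lsub(1) y w])
              show "y \<in> set_tree l" using conjunct2[OF hh] u yL w by blast
            next
              fix u assume u: "u \<in> set (search_path l x)"
              show "depth T a < depth T u" using conjunct2[OF hh] u by blast
            qed
          next
            assume xr: "x \<in> set_tree r"
            note hh = conjunct2[OF ih, rule_format, OF xr]
            show "(\<forall>z\<in>set_tree l. win ?p a z) \<and>
              (\<forall>u\<in>set (search_path r x). (\<forall>y\<in>set_tree (Node L b R). win ?p u y \<longrightarrow> y \<in> set_tree r)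
                \<and> depth T a < depth T u)"
            proof (intro conjI ballI impI)
              fix z assume "z \<in> set_tree l" thus "win ?p a z" using conjunct1[OF hh] by blast
            next
              fix u y assume u: "u \<in> set (search_path r x)" and y: "y \<in> set_tree (Node L b R)" and w: "win ?p u y"
              have yL: "y \<in> set_tree L" by (rule lift[OF u lsub(2) y w])
              show "y \<in> set_tree r" using conjunct2[OF hh] u yL w by blast
            next
              fix u assume u: "u \<in> set (search_path r x)"
              show "depth T a < depth T u" using conjunct2[OF hh] u by blast
            qed
          qed
        next
          case False
          hence "set_tree (Node l a r) \<subseteq> set_tree R" using inLR set_tree_subtrees by blast
          thus ?thesis using notR by auto
        qed
      next
        case xnL: False
        show ?thesis
        proof (cases "x \<in> set_tree R")
          case xR: True
          have xb: "b < x" using xR bR by auto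
          have IH: "\<forall>l a r. Node l a r \<in> subtrees R \<longrightarrow>
             (x \<in> set_tree l \<longrightarrow>
               (\<forall>z\<in>set_tree r. win ?p a z) \<and>
               (\<forall>u\<in>set (search_path l x). (\<forall>y\<in>set_tree R. win ?p u y \<longrightarrow> y \<in> set_tree l)
                    \<and> depth T a < depth T u)) \<and>
             (x \<in> set_tree r \<longrightarrow>
               (\<forall>z\<in>set_tree l. win ?p a z) \<and>
               (\<forall>u\<in>set (search_path r x). (\<forall>y\<in>set_tree R. win ?p u y \<longrightarrow> y \<in> set_tree r)
                    \<and> depth T a < depth T u))"
          proof (rule Node.IH(2)[of "pre @ [b]"])
            show "bst R" using Node.prems(1) by simp
            show "x \<in> set_tree R" by fact
            show "\<forall>v\<in>set_tree R. search_path T v = (pre @ [b]) @ search_path R v"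
              using spT bR by fastforce
            show "\<forall>w\<in>set (pre @ [b]). (\<forall>z\<in>set_tree R. w < z) \<or> (\<forall>z\<in>set_tree R. z < w)"
              using bnd bR by auto
          qed
          have pb: "b \<in> set ?p" using spT[of x] xR xb by simp
          show ?thesis
          proof (cases "Node l a r \<in> subtrees R")
            case True
            have stl: "set_tree (Node l a r) \<subseteq> set_tree R" using True set_tree_subtrees by blast
            have lift: "\<And>u y c. u \<in> set (search_path c x) \<Longrightarrow> set_tree c \<subseteq> set_tree R \<Longrightarrow>
                   y \<in> set_tree (Node L b R) \<Longrightarrow> win ?p u y \<Longrightarrow> y \<in> set_tree R"
            proof -
              fix u y c assume u: "u \<in> set (search_path c x)" "set_tree c \<subseteq> set_tree R"
                and y: "y \<in> set_tree (Node L b R)" and w: "win ?p u y"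
              have "b < u" using u search_path_subset[of c x] bR by auto
              hence "b < y" using w pb unfolding win_def by blast
              thus "y \<in> set_tree R" using y bL by auto
            qed
            have lsub: "set_tree l \<subseteq> set_tree R" "set_tree r \<subseteq> set_tree R" using stl by auto
            note ih = IH[rule_format, OF True]
            show ?thesis
            proof (rule conjI; intro impI)
              assume xl: "x \<in> set_tree l"
              note hh = conjunct1[OF ih, rule_format, OF xl]
              show "(\<forall>z\<in>set_tree r. win ?p a z) \<and>
                (\<forall>u\<in>set (search_path l x). (\<forall>y\<in>set_tree (Node L b R). win ?p u y \<longrightarrow> y \<in> set_tree l)
                  \<and> depth T a < depth T u)"
              proof (intro conjI ballI impI)
                fix z assume "z \<in> set_tree r" thus "win ?p a z" using conjunct1[OF hh] by blast
              next
                fix u y assume u: "u \<in> set (search_path l x)" and y: "y \<in> set_tree (Node L b R)" and w: "win ?p u y"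
                have yL: "y \<in> set_tree R" by (rule lift[OF u lsub(1) y w])
                show "y \<in> set_tree l" using conjunct2[OF hh] u yL w by blast
              next
                fix u assume u: "u \<in> set (search_path l x)"
                show "depth T a < depth T u" using conjunct2[OF hh] u by blast
              qed
            next
              assume xr: "x \<in> set_tree r"
              note hh = conjunct2[OF ih, rule_format, OF xr]
              show "(\<forall>z\<in>set_tree l. win ?p a z) \<and>
                (\<forall>u\<in>set (search_path r x). (\<forall>y\<in>set_tree (Node L b R). win ?p u y \<longrightarrow> y \<in> set_tree r)
                  \<and> depth T a < depth T u)"
              proof (intro conjI ballI impI)
                fix z assume "z \<in> set_tree l" thus "win ?p a z" using conjunct1[OF hh] by blast
              next
                fix u y assume u: "u \<in> set (search_path r x)" and y: "y \<in> set_tree (Node L b R)" and w: "win ?p u y"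
                have yL: "y \<in> set_tree R" by (rule lift[OF u lsub(2) y w])
                show "y \<in> set_tree r" using conjunct2[OF hh] u yL w by blast
              next
                fix u assume u: "u \<in> set (search_path r x)"
                show "depth T a < depth T u" using conjunct2[OF hh] u by blast
              qed
            qed
          next
            case False
            hence "set_tree (Node l a r) \<subseteq> set_tree L" using inLR set_tree_subtrees by blast
            thus ?thesis using xnL by auto
          qed
        next
          case xnR: False
          thus ?thesis using xnL stsub by auto
        qed
      qed
    qed
  qed
qed



lemma nt_le: "t < s \<Longrightarrow> s < length X \<Longrightarrow> P (X!s) \<Longrightarrow> next_time X t P \<le> enat s"
  unfolding next_time_def by (auto intro: Least_le)

lemma nt_enat': "next_time X t P = enat s \<Longrightarrow> t < s \<and> s < length X \<and> P (X!s)"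
proof -
  assume h: "next_time X t P = enat s"
  then have ex: "\<exists>s. t < s \<and> s < length X \<and> P (X ! s)" unfolding next_time_def by (auto split: if_splits)
  with h have "s = (LEAST s. t < s \<and> s < length X \<and> P (X ! s))" unfolding next_time_def by simp
  with LeastI_ex[OF ex] show ?thesis by simp
qed

lemma nt_mono: "(\<forall>s. t < s \<and> s < length X \<and> P (X!s) \<longrightarrow> Q (X!s)) \<Longrightarrow> next_time X t Q \<le> next_time X t P"
proof (cases "next_time X t P")
  case (enat s)
  assume h: "\<forall>s. t < s \<and> s < length X \<and> P (X!s) \<longrightarrow> Q (X!s)"
  from nt_enat'[OF enat] h have "t < s" "s < length X" "Q (X!s)" by auto
  hence "next_time X t Q \<le> enat s" by (rule nt_le)
  thus ?thesis using enat by simp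
next
  case infinity
  thus ?thesis by simp
qed

lemma filter_consec:
  assumes "t < s" "s < length xs" "P (xs!t)" "P (xs!s)" "\<forall>j. t < j \<and> j < s \<longrightarrow> \<not> P (xs!j)"
  shows "\<exists>i. i+1 < length (filter P xs) \<and> filter P xs ! i = xs!t \<and> filter P xs ! (i+1) = xs!s"
proof -
  define D where "D = drop (Suc t) xs"
  define m where "m = s - Suc t"
  have t: "t < length xs" using assms by simp
  have x1: "xs = take t xs @ xs!t # D" unfolding D_def using id_take_nth_drop[OF t] .
  have mD: "m < length D" unfolding D_def m_def using assms by simp
  have Dm: "D ! m = xs ! s" unfolding D_def m_def using assms by simp
  have x2: "D = take m D @ D!m # drop (Suc m) D" using id_take_nth_drop[OF mD] .
  have fm: "filter P (take m D) = []"
  proof -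
    have "\<forall>y\<in>set (take m D). \<not> P y"
    proof
      fix y assume "y \<in> set (take m D)"
      then obtain j where j: "j < length (take m D)" "take m D ! j = y" by (auto simp: in_set_conv_nth)
      have "y = xs ! (Suc t + j)" using j mD unfolding D_def by auto
      moreover have "t < Suc t + j" "Suc t + j < s" using j mD unfolding m_def by auto
      ultimately show "\<not> P y" using assms(5) by blast
    qed
    thus ?thesis by (simp add: filter_empty_conv)
  qed
  have f: "filter P xs = filter P (take t xs) @ xs!t # xs!s # filter P (drop (Suc m) D)"
    apply (subst x1) apply (subst x2) using fm assms(3,4) Dm by simp
  show ?thesis
    by (rule exI[of _ "length (filter P (take t xs))"]) (simp add: f nth_append)
qed

lemma alt_swap:
  assumes alt: "\<forall>i. i+1 < length (filter P X) \<longrightarrow> (L (filter P X ! i) \<longleftrightarrow> R (filter P X ! (i+1)))"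
    and cov: "\<forall>y\<in>set X. P y \<longrightarrow> (L y \<longleftrightarrow> \<not> R y)"
  shows "\<forall>i. i+1 < length (filter P X) \<longrightarrow> (R (filter P X ! i) \<longleftrightarrow> L (filter P X ! (i+1)))"
proof (intro allI impI)
  fix i assume i: "i+1 < length (filter P X)"
  have m1: "filter P X ! i \<in> set (filter P X)" by (rule nth_mem) (use i in simp)
  have m2: "filter P X ! (i+1) \<in> set (filter P X)" by (rule nth_mem) (use i in simp)
  from m1 m2
  have "filter P X ! i \<in> set X \<and> P (filter P X ! i)" "filter P X ! (i+1) \<in> set X \<and> P (filter P X ! (i+1))"
    by auto
  hence "L (filter P X ! i) \<longleftrightarrow> \<not> R (filter P X ! i)" "L (filter P X ! (i+1)) \<longleftrightarrow> \<not> R (filter P X ! (i+1))"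
    using cov by auto
  thus "R (filter P X ! i) \<longleftrightarrow> L (filter P X ! (i+1))" using alt i by blast
qed

lemma alt_step:
  assumes alt: "\<forall>i. i+1 < length (filter P X) \<longrightarrow> (L (filter P X ! i) \<longleftrightarrow> R (filter P X ! (i+1)))"
    and PL: "\<forall>y. L y \<longrightarrow> P y" and disj: "\<forall>y. \<not>(L y \<and> R y)"
    and ts: "t < s" "s < length X" "L (X!t)" "L (X!s)"
  shows "\<exists>j. t < j \<and> j < s \<and> R (X!j)"
proof -
  define j where "j = (LEAST j. t < j \<and> P (X!j))"
  have ex: "t < s \<and> P (X!s)" using ts PL by auto
  have j1: "t < j \<and> P (X!j)" unfolding j_def by (rule LeastI[of _ s]) (rule ex)
  have js: "j \<le> s" unfolding j_def by (rule Least_le) (rule ex)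
  have jmin: "\<forall>j'. t < j' \<and> j' < j \<longrightarrow> \<not> P (X!j')"
    unfolding j_def using not_less_Least by blast
  obtain i where i: "i+1 < length (filter P X)" "filter P X ! i = X!t" "filter P X ! (i+1) = X!j"
    using filter_consec[of t j X P] j1 js ts PL jmin by auto
  have "R (X!j)" using alt i ts(3) by metis
  moreover have "j \<noteq> s" using `R (X!j)` ts(4) disj by auto
  ultimately show ?thesis using j1 js by auto
qed

lemma nt_alt:
  assumes alt: "\<forall>i. i+1 < length (filter P X) \<longrightarrow> (L (filter P X ! i) \<longleftrightarrow> R (filter P X ! (i+1)))"
    and PL: "\<forall>y. L y \<longrightarrow> P y" and disj: "\<forall>y. \<not>(L y \<and> R y)"
    and t: "L (X!t)"
  shows "next_time X t L = \<infinity> \<or> next_time X t R < next_time X t L"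
proof (cases "next_time X t L")
  case (enat s)
  from nt_enat'[OF this] have s: "t < s" "s < length X" "L (X!s)" by auto
  obtain j where j: "t < j" "j < s" "R (X!j)" using alt_step[OF alt PL disj s(1,2) t s(3)] by blast
  have le: "next_time X t R \<le> enat j" using nt_le[of t j X R] j s by simp
  have js: "enat j < enat s" using j by simp
  show ?thesis using le_less_trans[OF le js] enat by simp
qed simp



lemma node_uniq:
  "bst t \<Longrightarrow> Node l a r \<in> subtrees t \<Longrightarrow> Node l' a r' \<in> subtrees t \<Longrightarrow> l = l' \<and> r = r'"
proof (induction t)
  case Leaf thus ?case by simp
next
  case (Node L b R)
  have bL: "\<forall>z\<in>set_tree L. z < b" and bR: "\<forall>z\<in>set_tree R. b < z" using Node.prems(1) by auto
  have A: "Node l a r = Node L b R \<or> Node l a r \<in> subtrees L \<or> Node l a r \<in> subtrees R" using Node.prems by auto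
  have B: "Node l' a r' = Node L b R \<or> Node l' a r' \<in> subtrees L \<or> Node l' a r' \<in> subtrees R" using Node.prems by auto
  have inL: "\<And>l r. Node l a r \<in> subtrees L \<Longrightarrow> a < b" by (metis bL in_set_tree_if)
  have inR: "\<And>l r. Node l a r \<in> subtrees R \<Longrightarrow> b < a" by (metis bR in_set_tree_if)
  consider (eq) "a = b" | (lt) "a < b" | (gt) "b < a" using less_linear by blast
  then show ?case
  proof cases
    case eq
    have "Node l a r = Node L b R" using A inL inR eq by blast
    moreover have "Node l' a r' = Node L b R" using B inL inR eq by blast
    ultimately show ?thesis by simp
  next
    case lt
    have "Node l a r \<in> subtrees L" using A inR[of l r] lt less_not_sym by blast
    moreover have "Node l' a r' \<in> subtrees L" using B inR[of l' r'] lt less_not_sym by blast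
    ultimately show ?thesis using Node.IH(1) Node.prems(1) by simp
  next
    case gt
    have "Node l a r \<in> subtrees R" using A inL[of l r] gt less_not_sym by blast
    moreover have "Node l' a r' \<in> subtrees R" using B inL[of l' r'] gt less_not_sym by blast
    ultimately show ?thesis using Node.IH(2) Node.prems(1) by simp
  qed
qed

lemma leaf_not_inner:
  assumes "bst t" "y \<in> leaf_keys t" "Node l a r \<in> subtrees t" "l \<noteq> Leaf"
  shows "y \<noteq> a"
  using node_uniq[OF assms(1) assms(3), of Leaf Leaf] assms(2,4) unfolding leaf_keys_def by auto

lemma leaf_keys_sub: "leaf_keys t \<subseteq> set_tree t"
  by (auto simp: leaf_keys_def dest: in_set_tree_if)

lemma chain3:
  fixes a b c d :: enat
  assumes 1: "a \<le> b" and 2: "c \<le> d" and 3: "c = \<infinity> \<or> b < c"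
  shows "a \<le> d"
proof (cases "c = \<infinity>")
  case True
  with 2 have "d = \<infinity>" by simp
  thus ?thesis by simp
next
  case False
  with 3 have "b < c" by simp
  thus ?thesis using 1 2 by (meson le_less_trans less_imp_le order_trans)
qed

lemma step_id:
  assumes bst: "bst T" and full: "full_tree T" and ss: "strongly_stable T X" and t: "t < length X"
  shows "gf_step X t T = T"
proof -
  define x where "x = X ! t"
  define p where "p = search_path T x"
  have setX: "set X \<subseteq> leaf_keys T" using ss unfolding strongly_stable_def by auto
  have xT: "x \<in> set_tree T" using setX leaf_keys_sub t unfolding x_def by force
  have XT: "\<And>s. s < length X \<Longrightarrow> X!s \<in> set_tree T" using setX leaf_keys_sub by force
  have G0: "\<forall>l a r. Node l a r \<in> subtrees T \<longrightarrow>
     (x \<in> set_tree l \<longrightarrow>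
       (\<forall>z\<in>set_tree r. win p a z) \<and>
       (\<forall>u\<in>set (search_path l x). (\<forall>y\<in>set_tree T. win p u y \<longrightarrow> y \<in> set_tree l)
            \<and> depth T a < depth T u)) \<and>
     (x \<in> set_tree r \<longrightarrow>
       (\<forall>z\<in>set_tree l. win p a z) \<and>
       (\<forall>u\<in>set (search_path r x). (\<forall>y\<in>set_tree T. win p u y \<longrightarrow> y \<in> set_tree r)
            \<and> depth T a < depth T u))"
    unfolding p_def by (rule G[of T x T "[]"]) (use bst xT in auto)
  define prio where "prio = (\<lambda>v. (next_time X t (win p v), depth T v))"
  have key: "\<forall>l a r. Node l a r \<in> subtrees T \<longrightarrow> x \<in> set_tree (Node l a r) \<longrightarrow>
        (\<forall>u\<in>set (search_path (Node l a r) x). u \<noteq> a \<longrightarrow> prio a < prio u)"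
  proof (intro allI impI ballI)
    fix l a r u assume sub: "Node l a r \<in> subtrees T" and xin: "x \<in> set_tree (Node l a r)"
      and u: "u \<in> set (search_path (Node l a r) x)" and ua: "u \<noteq> a"
    have bsub: "bst (Node l a r)" using bst_subtrees[OF bst sub] .
    have disj: "\<forall>y. \<not> (y \<in> set_tree l \<and> y \<in> set_tree r)" using bsub by fastforce
    have xa: "x \<noteq> a" using u ua by (auto split: if_splits)
    have lr: "l = Leaf \<longleftrightarrow> r = Leaf" using full sub unfolding full_tree_def by blast
    define P where "P = (\<lambda>y. y \<in> set_tree (Node l a r))"
    have ssn: "l \<noteq> Leaf \<Longrightarrow> r \<noteq> Leaf \<Longrightarrow>
      \<forall>i. i+1 < length (filter P X) \<longrightarrow> (filter P X ! i \<in> set_tree l \<longleftrightarrow> filter P X ! (i+1) \<in> set_tree r)"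
      using ss sub unfolding strongly_stable_def strongly_stable_node_def sub_seq_def P_def by blast
    have cov: "l \<noteq> Leaf \<Longrightarrow> \<forall>y\<in>set X. P y \<longrightarrow> (y \<in> set_tree l \<longleftrightarrow> \<not> y \<in> set_tree r)"
    proof (intro ballI impI)
      fix y assume ln: "l \<noteq> Leaf" and y: "y \<in> set X" and Py: "P y"
      have "y \<noteq> a" using leaf_not_inner[OF bst _ sub ln] y setX by blast
      thus "y \<in> set_tree l \<longleftrightarrow> \<not> y \<in> set_tree r" using Py disj unfolding P_def by auto
    qed
    have tl: "\<And>s. next_time X t (\<lambda>y. y \<in> set_tree l) = next_time X t (\<lambda>y. y \<in> set_tree l)" by simp
    consider "x \<in> set_tree l" | "x \<in> set_tree r" using xin xa by auto
    then show "prio a < prio u"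
    proof cases
      case 1
      have ln: "l \<noteq> Leaf" using 1 by auto
      hence rn: "r \<noteq> Leaf" using lr by simp
      have xa': "x < a" using 1 bsub by auto
      have u': "u \<in> set (search_path l x)" using u xa' ua by simp
      note hh = conjunct1[OF G0[rule_format, OF sub], rule_format, OF 1]
      have g1: "\<forall>z\<in>set_tree r. win p a z" using conjunct1[OF hh] .
      have g23: "(\<forall>y\<in>set_tree T. win p u y \<longrightarrow> y \<in> set_tree l) \<and> depth T a < depth T u"
        using conjunct2[OF hh] u' by (rule bspec)
      have g2: "\<forall>y\<in>set_tree T. win p u y \<longrightarrow> y \<in> set_tree l" using g23 by (rule conjunct1)
      have g3: "depth T a < depth T u" using g23 by (rule conjunct2)
      have ta: "next_time X t (win p a) \<le> next_time X t (\<lambda>y. y \<in> set_tree r)"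
        by (rule nt_mono) (use g1 in auto)
      have tu: "next_time X t (\<lambda>y. y \<in> set_tree l) \<le> next_time X t (win p u)"
        by (rule nt_mono) (use g2 XT in auto)
      have alt: "next_time X t (\<lambda>y. y \<in> set_tree l) = \<infinity> \<or>
          next_time X t (\<lambda>y. y \<in> set_tree r) < next_time X t (\<lambda>y. y \<in> set_tree l)"
        by (rule nt_alt[of P]) (use ssn[OF ln rn] disj 1 x_def P_def in auto)
      have "next_time X t (win p a) \<le> next_time X t (win p u)"
        using chain3[OF ta tu alt] .
      thus ?thesis using g3 unfolding prio_def by simp
    next
      case 2
      have rn: "r \<noteq> Leaf" using 2 by auto
      hence ln: "l \<noteq> Leaf" using lr by simp
      have xa': "a < x" using 2 bsub by auto
      have u': "u \<in> set (search_path r x)" using u xa' ua by auto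
      note hh = conjunct2[OF G0[rule_format, OF sub], rule_format, OF 2]
      have g1: "\<forall>z\<in>set_tree l. win p a z" using conjunct1[OF hh] .
      have g23: "(\<forall>y\<in>set_tree T. win p u y \<longrightarrow> y \<in> set_tree r) \<and> depth T a < depth T u"
        using conjunct2[OF hh] u' by (rule bspec)
      have g2: "\<forall>y\<in>set_tree T. win p u y \<longrightarrow> y \<in> set_tree r" using g23 by (rule conjunct1)
      have g3: "depth T a < depth T u" using g23 by (rule conjunct2)
      have ta: "next_time X t (win p a) \<le> next_time X t (\<lambda>y. y \<in> set_tree l)"
        by (rule nt_mono) (use g1 in auto)
      have tu: "next_time X t (\<lambda>y. y \<in> set_tree r) \<le> next_time X t (win p u)"
        by (rule nt_mono) (use g2 XT in auto)
      have sw: "\<forall>i. i+1 < length (filter P X) \<longrightarrow> (filter P X ! i \<in> set_tree r \<longleftrightarrow> filter P X ! (i+1) \<in> set_tree l)"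
        by (rule alt_swap) (use ssn[OF ln rn] cov[OF ln] in auto)
      have alt: "next_time X t (\<lambda>y. y \<in> set_tree r) = \<infinity> \<or>
          next_time X t (\<lambda>y. y \<in> set_tree l) < next_time X t (\<lambda>y. y \<in> set_tree r)"
        by (rule nt_alt[of P]) (use sw disj 2 x_def P_def in auto)
      have "next_time X t (win p a) \<le> next_time X t (win p u)"
        using chain3[OF ta tu alt] .
      thus ?thesis using g3 unfolding prio_def by simp
    qed
  qed
  have "gf_step X t T = gf_build prio (sort p) (hanging T x)"
    unfolding gf_step_def prio_def p_def x_def win_def Let_def by simp
  also have "\<dots> = T" unfolding p_def by (rule build_id[OF bst xT key])
  finally show ?thesis .
qed

lemma gf_tree_id:
  assumes "bst T" "full_tree T" "strongly_stable T X"
  shows "t \<le> length X \<Longrightarrow> gf_tree X T t = T"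
  by (induction t) (use step_id[OF assms] in auto)



lemma alt_balance:
  "\<forall>y\<in>set B. (L y \<longleftrightarrow> \<not> R y) \<Longrightarrow>
   \<forall>i. Suc i < length B \<longrightarrow> (L (B!i) \<longleftrightarrow> R (B!Suc i)) \<Longrightarrow>
   (B \<noteq> [] \<longrightarrow> (L (hd B) \<longleftrightarrow> R (last B))) \<Longrightarrow>
   length (filter L B) = length (filter R B)"
proof (induction B rule: induct_list012)
  case 1 thus ?case by simp
next
  case (2 x) thus ?case by simp
next
  case (3 x y zs)
  have a0: "L x \<longleftrightarrow> R y" using "3.prems"(2)[rule_format, of 0] by simp
  have xo: "L x \<longleftrightarrow> \<not> R x" "L y \<longleftrightarrow> \<not> R y" using "3.prems"(1) by auto
  have altz: "\<forall>i. Suc i < length zs \<longrightarrow> (L (zs!i) \<longleftrightarrow> R (zs!Suc i))"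
  proof (intro allI impI)
    fix i assume "Suc i < length zs"
    thus "L (zs!i) \<longleftrightarrow> R (zs!Suc i)" using "3.prems"(2)[rule_format, of "Suc (Suc i)"] by simp
  qed
  have endz: "zs \<noteq> [] \<longrightarrow> (L (hd zs) \<longleftrightarrow> R (last zs))"
  proof
    assume zne: "zs \<noteq> []"
    have a1: "L y \<longleftrightarrow> R (zs!0)" using "3.prems"(2)[rule_format, of 1] zne by simp
    have z0: "L (zs!0) \<longleftrightarrow> \<not> R (zs!0)" using "3.prems"(1) zne by auto
    have e: "L x \<longleftrightarrow> R (last zs)" using "3.prems"(3) zne by simp
    show "L (hd zs) \<longleftrightarrow> R (last zs)" using a0 a1 z0 e xo zne by (simp add: hd_conv_nth) blast
  qed
  have IH: "length (filter L zs) = length (filter R zs)"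
    using "3.IH"(1) "3.prems"(1) altz endz by simp
  show ?case using IH a0 xo by auto
qed

lemma count_list_filter: "P x \<Longrightarrow> count_list (filter P xs) x = count_list xs x"
  by (induction xs) auto

lemma count_leaf:
  fixes V :: "nat tree"
  assumes "bst V" "full_tree V" "set B \<subseteq> leaf_keys V"
    "\<forall>l a r. Node l a r \<in> subtrees V \<and> l \<noteq> Leaf \<and> r \<noteq> Leaf \<longrightarrow>
        length (filter (\<lambda>y. y \<in> set_tree l) B) = length (filter (\<lambda>y. y \<in> set_tree r) B)"
    "x \<in> leaf_keys V"
  shows "count_list B x * 2 ^ depth V x = length B"
  using assms
proof (induction V arbitrary: B)
  case Leaf thus ?case by (simp add: leaf_keys_def)
next
  case (Node l a r)
  have lr: "l = Leaf \<longleftrightarrow> r = Leaf" using Node.prems(2) unfolding full_tree_def by auto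
  show ?case
  proof (cases "l = Leaf")
    case True
    hence rl: "r = Leaf" using lr by simp
    have lk: "leaf_keys (Node l a r) = {a}" using True rl by (simp add: leaf_keys_def)
    have "\<forall>y\<in>set B. y = a" using Node.prems(3) lk by auto
    hence "count_list B a = length B" by (induction B) auto
    moreover have "x = a" using Node.prems(5) lk by simp
    ultimately show ?thesis using True rl by (simp add: depth_def)
  next
    case False
    hence rn: "r \<noteq> Leaf" using lr by simp
    have bl: "\<forall>z\<in>set_tree l. z < a" and br: "\<forall>z\<in>set_tree r. a < z" using Node.prems(1) by auto
    have lk: "leaf_keys (Node l a r) = leaf_keys l \<union> leaf_keys r" using False unfolding leaf_keys_def by auto
    have fl: "full_tree l" "full_tree r" using Node.prems(2) unfolding full_tree_def by auto
    define Bl where "Bl = filter (\<lambda>y. y \<in> set_tree l) B"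
    define Br where "Br = filter (\<lambda>y. y \<in> set_tree r) B"
    have yin: "\<And>y. y \<in> set B \<Longrightarrow> (y \<in> set_tree l \<and> y \<in> leaf_keys l \<and> y \<notin> set_tree r) \<or> (y \<in> set_tree r \<and> y \<in> leaf_keys r \<and> y \<notin> set_tree l)"
    proof -
      fix y assume "y \<in> set B"
      hence "y \<in> leaf_keys l \<or> y \<in> leaf_keys r" using Node.prems(3) lk by blast
      moreover have "y \<in> leaf_keys l \<Longrightarrow> y \<in> set_tree l" "y \<in> leaf_keys r \<Longrightarrow> y \<in> set_tree r"
        using leaf_keys_sub[of l] leaf_keys_sub[of r] by auto
      moreover have "y \<in> set_tree l \<Longrightarrow> y \<notin> set_tree r" by (metis bl br less_asym)
      ultimately show "(y \<in> set_tree l \<and> y \<in> leaf_keys l \<and> y \<notin> set_tree r) \<or> (y \<in> set_tree r \<and> y \<in> leaf_keys r \<and> y \<notin> set_tree l)"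
        by blast
    qed
    have eqlr: "length Bl = length Br" unfolding Bl_def Br_def using Node.prems(4)[rule_format, of l a r] False rn by simp
    have lenB: "length B = length Bl + length Br"
    proof -
      have "filter (\<lambda>y. \<not> y \<in> set_tree l) B = Br" unfolding Br_def
        by (rule filter_cong) (use yin in auto)
      thus ?thesis using sum_length_filter_compl[of "\<lambda>y. y \<in> set_tree l" B] unfolding Bl_def by simp
    qed
    have subfilt: "\<And>c P. set_tree c \<subseteq> P \<Longrightarrow> filter (\<lambda>y. y \<in> set_tree c) (filter (\<lambda>y. y \<in> P) B) = filter (\<lambda>y. y \<in> set_tree c) B"
      by (auto simp: filter_filter intro: filter_cong)
    consider "x \<in> leaf_keys l" | "x \<in> leaf_keys r" using Node.prems(5) lk by auto
    then show ?thesis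
    proof cases
      case 1
      have xl: "x \<in> set_tree l" by (rule subsetD[OF leaf_keys_sub 1])
      have IH: "count_list Bl x * 2 ^ depth l x = length Bl"
      proof (rule Node.IH(1))
        show "bst l" using Node.prems(1) by simp
        show "full_tree l" by (rule fl(1))
        show "set Bl \<subseteq> leaf_keys l" unfolding Bl_def using yin by auto
        show "\<forall>l' a' r'. Node l' a' r' \<in> subtrees l \<and> l' \<noteq> Leaf \<and> r' \<noteq> Leaf \<longrightarrow>
          length (filter (\<lambda>y. y \<in> set_tree l') Bl) = length (filter (\<lambda>y. y \<in> set_tree r') Bl)"
        proof (intro allI impI)
          fix l' a' r' assume h: "Node l' a' r' \<in> subtrees l \<and> l' \<noteq> Leaf \<and> r' \<noteq> Leaf"
          have s: "set_tree l' \<subseteq> set_tree l" "set_tree r' \<subseteq> set_tree l"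
            using set_tree_subtrees[of "Node l' a' r'" l] h by auto
          show "length (filter (\<lambda>y. y \<in> set_tree l') Bl) = length (filter (\<lambda>y. y \<in> set_tree r') Bl)"
            unfolding Bl_def subfilt[OF s(1)] subfilt[OF s(2)] using Node.prems(4)[rule_format, of l' a' r'] h by simp
        qed
        show "x \<in> leaf_keys l" by fact
      qed
      have cnt: "count_list Bl x = count_list B x" unfolding Bl_def by (rule count_list_filter) (rule xl)
      have dep: "depth (Node l a r) x = depth l x + 1"
        using xl bl search_path_ne[OF xl] by (auto simp: depth_def)
      show ?thesis using IH cnt dep lenB eqlr by simp
    next
      case 2
      have xr: "x \<in> set_tree r" by (rule subsetD[OF leaf_keys_sub 2])
      have IH: "count_list Br x * 2 ^ depth r x = length Br"
      proof (rule Node.IH(2))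
        show "bst r" using Node.prems(1) by simp
        show "full_tree r" by (rule fl(2))
        show "set Br \<subseteq> leaf_keys r" unfolding Br_def using yin by auto
        show "\<forall>l' a' r'. Node l' a' r' \<in> subtrees r \<and> l' \<noteq> Leaf \<and> r' \<noteq> Leaf \<longrightarrow>
          length (filter (\<lambda>y. y \<in> set_tree l') Br) = length (filter (\<lambda>y. y \<in> set_tree r') Br)"
        proof (intro allI impI)
          fix l' a' r' assume h: "Node l' a' r' \<in> subtrees r \<and> l' \<noteq> Leaf \<and> r' \<noteq> Leaf"
          have s: "set_tree l' \<subseteq> set_tree r" "set_tree r' \<subseteq> set_tree r"
            using set_tree_subtrees[of "Node l' a' r'" r] h by auto
          show "length (filter (\<lambda>y. y \<in> set_tree l') Br) = length (filter (\<lambda>y. y \<in> set_tree r') Br)"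
            unfolding Br_def subfilt[OF s(1)] subfilt[OF s(2)] using Node.prems(4)[rule_format, of l' a' r'] h by simp
        qed
        show "x \<in> leaf_keys r" by fact
      qed
      have cnt: "count_list Br x = count_list B x" unfolding Br_def by (rule count_list_filter) (rule xr)
      have dep: "depth (Node l a r) x = depth r x + 1"
        using xr br search_path_ne[OF xr] by (auto simp: depth_def)
      show ?thesis using IH cnt dep lenB eqlr by simp
    qed
  qed
qed



lemma balance_A:
  assumes bst: "bst T" and cA: "conforms T s A" and cAA: "conforms T s (A @ A)"
    and sub: "Node l a r \<in> subtrees T" and ln: "l \<noteq> Leaf" and rn: "r \<noteq> Leaf"
  shows "length (filter (\<lambda>y. y \<in> set_tree l) A) = length (filter (\<lambda>y. y \<in> set_tree r) A)"
proof -
  define P where "P = (\<lambda>y. y \<in> set_tree (Node l a r))"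
  define B where "B = filter P A"
  have setA: "set A \<subseteq> leaf_keys T" using cA unfolding conforms_def strongly_stable_def by blast
  have bsub: "bst (Node l a r)" using bst_subtrees[OF bst sub] .
  have alt: "\<forall>i. i + 1 < length (B @ B) \<longrightarrow> ((B @ B) ! i \<in> set_tree l \<longleftrightarrow> (B @ B) ! (i + 1) \<in> set_tree r)"
  proof -
    have "strongly_stable T (A @ A)" using cAA unfolding conforms_def by blast
    hence "strongly_stable_node l r (sub_seq (Node l a r) (A @ A))"
      using sub ln rn unfolding strongly_stable_def by blast
    moreover have "sub_seq (Node l a r) (A @ A) = B @ B" unfolding sub_seq_def B_def P_def by simp
    ultimately show ?thesis unfolding strongly_stable_node_def by simp
  qed
  have xo: "\<forall>y\<in>set B. (y \<in> set_tree l \<longleftrightarrow> \<not> y \<in> set_tree r)"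
  proof
    fix y assume y: "y \<in> set B"
    hence yA: "y \<in> set A" and Py: "P y" unfolding B_def by auto
    have ya: "y \<noteq> a" using leaf_not_inner[OF bst _ sub ln] yA setA by blast
    have bl: "\<forall>z\<in>set_tree l. z < a" and br: "\<forall>z\<in>set_tree r. a < z" using bsub by auto
    have yy: "y \<in> set_tree l \<or> y \<in> set_tree r" using Py ya unfolding P_def by auto
    have nn: "\<not> (y \<in> set_tree l \<and> y \<in> set_tree r)" using bl br less_asym by blast
    show "y \<in> set_tree l \<longleftrightarrow> \<not> y \<in> set_tree r" using yy nn by blast
  qed
  have altB: "\<forall>i. Suc i < length B \<longrightarrow> (B!i \<in> set_tree l \<longleftrightarrow> B!Suc i \<in> set_tree r)"
  proof (intro allI impI)
    fix i assume i: "Suc i < length B"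
    thus "B!i \<in> set_tree l \<longleftrightarrow> B!Suc i \<in> set_tree r" using alt[rule_format, of i] by (simp add: nth_append)
  qed
  have endB: "B \<noteq> [] \<longrightarrow> (hd B \<in> set_tree l \<longleftrightarrow> last B \<in> set_tree r)"
  proof
    assume ne: "B \<noteq> []"
    have e: "(B @ B) ! (length B - 1) \<in> set_tree l \<longleftrightarrow> (B @ B) ! length B \<in> set_tree r"
      using alt[rule_format, of "length B - 1"] ne by simp
    have "last B \<in> set_tree l \<longleftrightarrow> hd B \<in> set_tree r"
      using e ne by (simp add: nth_append last_conv_nth hd_conv_nth)
    moreover have "last B \<in> set B" "hd B \<in> set B" using ne by auto
    ultimately show "hd B \<in> set_tree l \<longleftrightarrow> last B \<in> set_tree r" using xo by blast
  qed
  have "length (filter (\<lambda>y. y \<in> set_tree l) B) = length (filter (\<lambda>y. y \<in> set_tree r) B)"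
    by (rule alt_balance[OF xo altB endB])
  moreover have "filter (\<lambda>y. y \<in> set_tree l) B = filter (\<lambda>y. y \<in> set_tree l) A"
    "filter (\<lambda>y. y \<in> set_tree r) B = filter (\<lambda>y. y \<in> set_tree r) A"
    unfolding B_def P_def by (auto simp: filter_filter intro: filter_cong)
  ultimately show ?thesis by simp
qed

theorem corollary2:
  fixes T :: "nat tree" and X A :: "nat list" and n k :: nat and s :: "nat \<Rightarrow> bool"
  assumes "bst T" and "set_tree T = {1..n}" and "full_tree T"
    and "strongly_stable T X"
    and "conforms T s X" and "atomic_seq T s A"
    and "k \<ge> 1" and "X = concat (replicate k A)"
  shows "gf_avg_cost X T = (\<Sum>x\<in>leaf_keys T. real (depth T x + 1) / 2 ^ depth T x)"
proof -
  note bst = assms(1) and full = assms(3) and ss = assms(4) and at = assms(6) and k = assms(7)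
    and X = assms(8)
  have Ane: "A \<noteq> []" using at unfolding atomic_seq_def by simp
  have rep: "\<forall>k\<ge>1. conforms T s (concat (replicate k A))" using at unfolding atomic_seq_def by blast
  have "conforms T s (concat (replicate 1 A))" using rep[rule_format, of 1] by simp
  hence cA: "conforms T s A" by simp
  have "conforms T s (concat (replicate 2 A))" using rep[rule_format, of 2] by simp
  hence cAA: "conforms T s (A @ A)" by (simp add: numeral_2_eq_2)
  have setA: "set A \<subseteq> leaf_keys T" using cA unfolding conforms_def strongly_stable_def by blast
  have setX: "set X \<subseteq> leaf_keys T" using ss unfolding strongly_stable_def by blast
  have finLK: "finite (leaf_keys T)" by (rule finite_subset[OF leaf_keys_sub]) simp
  define f where "f = (\<lambda>x. depth T x + 1)"
  have cntA: "\<And>x. x \<in> leaf_keys T \<Longrightarrow> count_list A x * 2 ^ depth T x = length A"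
  proof (rule count_leaf[OF bst full setA])
    show "\<forall>l a r. Node l a r \<in> subtrees T \<and> l \<noteq> Leaf \<and> r \<noteq> Leaf \<longrightarrow>
        length (filter (\<lambda>y. y \<in> set_tree l) A) = length (filter (\<lambda>y. y \<in> set_tree r) A)"
      using balance_A[OF bst cA cAA] by blast
  qed
  have cntX: "\<And>x. count_list X x = k * count_list A x"
    unfolding X by (simp add: count_list_concat sum_list_replicate)
  have lenX: "length X = k * length A" unfolding X by (simp add: length_concat sum_list_replicate)
  have cost: "gf_cost X T = (\<Sum>x\<in>leaf_keys T. count_list X x * f x)"
  proof -
    have "gf_cost X T = (\<Sum>t<length X. f (X!t))"
      unfolding gf_cost_def
    proof (rule sum.cong[OF refl])
      fix t assume t: "t \<in> {..<length X}"
      have "gf_tree X T t = T" using gf_tree_id[OF bst full ss] t by simp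
      moreover have "X!t \<in> set_tree T"
      proof -
        have "X!t \<in> set X" using t by simp
        thus ?thesis by (rule subsetD[OF leaf_keys_sub subsetD[OF setX]])
      qed
      ultimately show "length (search_path (gf_tree X T t) (X!t)) = f (X!t)"
        unfolding f_def depth_def using search_path_ne[of "X!t" T] by simp
    qed
    also have "\<dots> = sum_list (map f X)"
      by (simp add: sum_list_sum_nth atLeast0LessThan)
    also have "\<dots> = (\<Sum>x\<in>set X. count_list X x * f x)" by (rule sum_list_map_eq_sum_count)
    also have "\<dots> = (\<Sum>x\<in>leaf_keys T. count_list X x * f x)"
      by (rule sum.mono_neutral_left[OF finLK setX]) simp
    finally show ?thesis .
  qed
  have kpos: "real k > 0" using k by simp
  have Apos: "real (length A) > 0" using Ane by simp
  have "gf_avg_cost X T = (\<Sum>x\<in>leaf_keys T. real (count_list X x * f x)) / (real k * real (length A))"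
    unfolding gf_avg_cost_def cost lenX by simp
  also have "\<dots> = (\<Sum>x\<in>leaf_keys T. real (count_list X x * f x) / (real k * real (length A)))"
    by (rule sum_divide_distrib)
  also have "\<dots> = (\<Sum>x\<in>leaf_keys T. real (depth T x + 1) / 2 ^ depth T x)"
  proof (rule sum.cong[OF refl])
    fix x assume x: "x \<in> leaf_keys T"
    have c0: "real (count_list A x * 2 ^ depth T x) = real (length A)" by (simp only: cntA[OF x])
    have c: "real (count_list A x) * 2 ^ depth T x = real (length A)" using c0 by simp
    have c': "real (count_list A x) = real (length A) / 2 ^ depth T x"
      using c by (simp add: eq_divide_eq)
    have "real (count_list X x * f x) = real k * real (count_list A x) * real (depth T x + 1)"
      unfolding cntX f_def by (simp only: of_nat_mult)
    also have "\<dots> = real k * real (length A) * (real (depth T x + 1) / 2 ^ depth T x)"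
      unfolding c' by simp
    finally have e: "real (count_list X x * f x) = real k * real (length A) * (real (depth T x + 1) / 2 ^ depth T x)" .
    have kA: "real k * real (length A) \<noteq> 0" using kpos Apos by simp
    show "real (count_list X x * f x) / (real k * real (length A)) = real (depth T x + 1) / 2 ^ depth T x"
      unfolding e using kA by simp
  qed
  finally show ?thesis .
qed


end
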